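(* Let $n\ge1$, $N=\{1,\dots,n\}$, $A=(a_{ij})\in[0,1]^{n\times n}$, $b=(b_1,\dots,b_n)$ with $b_i>0$, assume $\check\alpha_j\le1$ for all $j\in N$, and let $\lambda\in[0,+\infty)$. If for every $p=(p_1,\dots,p_n)\in P$ the system $$\begin{cases} x_j=d_{0j}=1 & \text{for all } j\in N^*,\\ d_{(p_j-1)j}\le x_j\le d_{p_jj} & \text{for all } j\in N\setminus N^*,\\ \sum_{j\in N^*}a_{ij}+\sum_{j\in N\setminus N^*}\big[\gamma_{ij}\,x_j+(1-\gamma_{ij})\,a_{ij}\big]\ge b_i & \text{for all } i\in N,\\ \sum_{j\in N^*}a_{ij}+\sum_{j\in N\setminus N^*}\big[\gamma_{ij}\,x_j+(1-\gamma_{ij})\,a_{ij}\big]=\lambda x_i & \text{for all } i\in N\end{cases}$$ has no solution $x\in[0,1]^n$, then $V^*(A,\lambda)=\emptyset$.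
   Context: $\theta=(0,\dots,0)$. For $x\in[0,1]^n$, $(A\odot x^T)_i=\sum_{j\in N}\min\{a_{ij},x_j\}$. $V^*(A,\lambda)=\{x\in[0,1]^n: (A\odot x^T)_i\ge b_i \text{ and } (A\odot x^T)_i=\lambda x_i \text{ for all } i\in N,\ x\neq\theta\}$. $\check\alpha_j=\max\big(\{0\}\cup\{b_i-\sum_{k\in N\setminus\{j\}}a_{ik}: i\in N\}\big)$. $D_j=\{d_{0j}<\dots<d_{l_jj}\}$ is the set $\{\check\alpha_j\}\cup\{a_{ij}: i\in N,\ a_{ij}\ge\check\alpha_j\}\cup\{1\}$ listed increasingly. $N^*=\{j\in N:\check\alpha_j=1\}$; $P_j=\{0\}$ for $j\in N^*$ and $P_j=\{1,\dots,l_j\}$ (indices with $d_{pj}>\check\alpha_j$) for $j\in N\setminus N^*$; $P=P_1\times\dots\times P_n$. For $p\in P$, $i\in N$, $j\in N\setminus N^*$: $\gamma_{ij}=1$ if $d_{p_jj}\le a_{ij}$ and $\gamma_{ij}=0$ if $a_{ij}\le d_{(p_j-1)j}$. *)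

theory Defs
  imports Complex_Main
begin

text \<open>Index set N is the finite type 'n (so n = CARD('n) \<ge> 1).
  Matrices are functions 'n \<Rightarrow> 'n \<Rightarrow> real, vectors 'n \<Rightarrow> real.\<close>

definition maxmin_prod :: "('n::finite \<Rightarrow> 'n \<Rightarrow> real) \<Rightarrow> ('n \<Rightarrow> real) \<Rightarrow> 'n \<Rightarrow> real" where
  "maxmin_prod A x i = (\<Sum>j\<in>UNIV. min (A i j) (x j))"

definition unit_box :: "('n \<Rightarrow> real) set" where
  "unit_box = {x. \<forall>j. 0 \<le> x j \<and> x j \<le> 1}"

definition V_star :: "('n::finite \<Rightarrow> 'n \<Rightarrow> real) \<Rightarrow> ('n \<Rightarrow> real) \<Rightarrow> real \<Rightarrow> ('n \<Rightarrow> real) set" where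
  "V_star A b lam = {x \<in> unit_box.
     (\<forall>i. maxmin_prod A x i \<ge> b i \<and> maxmin_prod A x i = lam * x i) \<and> x \<noteq> (\<lambda>_. 0)}"

definition alpha_check :: "('n::finite \<Rightarrow> 'n \<Rightarrow> real) \<Rightarrow> ('n \<Rightarrow> real) \<Rightarrow> 'n \<Rightarrow> real" where
  "alpha_check A b j = Max ({0} \<union> {b i - (\<Sum>k\<in>UNIV - {j}. A i k) | i. True})"

definition Dset :: "('n::finite \<Rightarrow> 'n \<Rightarrow> real) \<Rightarrow> ('n \<Rightarrow> real) \<Rightarrow> 'n \<Rightarrow> real set" where
  "Dset A b j = {alpha_check A b j} \<union> {A i j | i. A i j \<ge> alpha_check A b j} \<union> {1}"

text \<open>d_{p j}: the p-th element (0-based) of D_j listed increasingly; l_j = |D_j| - 1.\<close>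
definition dval :: "('n::finite \<Rightarrow> 'n \<Rightarrow> real) \<Rightarrow> ('n \<Rightarrow> real) \<Rightarrow> nat \<Rightarrow> 'n \<Rightarrow> real" where
  "dval A b p j = sorted_list_of_set (Dset A b j) ! p"

definition lval :: "('n::finite \<Rightarrow> 'n \<Rightarrow> real) \<Rightarrow> ('n \<Rightarrow> real) \<Rightarrow> 'n \<Rightarrow> nat" where
  "lval A b j = card (Dset A b j) - 1"

definition Nstar :: "('n::finite \<Rightarrow> 'n \<Rightarrow> real) \<Rightarrow> ('n \<Rightarrow> real) \<Rightarrow> 'n set" where
  "Nstar A b = {j. alpha_check A b j = 1}"

definition Pj :: "('n::finite \<Rightarrow> 'n \<Rightarrow> real) \<Rightarrow> ('n \<Rightarrow> real) \<Rightarrow> 'n \<Rightarrow> nat set" where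
  "Pj A b j = (if j \<in> Nstar A b then {0} else {1..lval A b j})"

definition Pset :: "('n::finite \<Rightarrow> 'n \<Rightarrow> real) \<Rightarrow> ('n \<Rightarrow> real) \<Rightarrow> ('n \<Rightarrow> nat) set" where
  "Pset A b = {p. \<forall>j. p j \<in> Pj A b j}"

text \<open>gamma_{ij} = 1 if d_{p_j j} \<le> a_ij, and 0 otherwise (then a_ij \<le> d_{(p_j-1) j}).\<close>
definition gamma :: "('n::finite \<Rightarrow> 'n \<Rightarrow> real) \<Rightarrow> ('n \<Rightarrow> real) \<Rightarrow> ('n \<Rightarrow> nat) \<Rightarrow> 'n \<Rightarrow> 'n \<Rightarrow> real" where
  "gamma A b p i j = (if dval A b (p j) j \<le> A i j then 1 else 0)"

definition sys_lhs :: "('n::finite \<Rightarrow> 'n \<Rightarrow> real) \<Rightarrow> ('n \<Rightarrow> real) \<Rightarrow> ('n \<Rightarrow> nat) \<Rightarrow> ('n \<Rightarrow> real) \<Rightarrow> 'n \<Rightarrow> real" where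
  "sys_lhs A b p x i = (\<Sum>j\<in>Nstar A b. A i j)
     + (\<Sum>j\<in>UNIV - Nstar A b. gamma A b p i j * x j + (1 - gamma A b p i j) * A i j)"

definition system_p :: "('n::finite \<Rightarrow> 'n \<Rightarrow> real) \<Rightarrow> ('n \<Rightarrow> real) \<Rightarrow> real \<Rightarrow> ('n \<Rightarrow> nat) \<Rightarrow> ('n \<Rightarrow> real) \<Rightarrow> bool" where
  "system_p A b lam p x \<longleftrightarrow>
     (\<forall>j\<in>Nstar A b. x j = dval A b 0 j \<and> x j = 1) \<and>
     (\<forall>j\<in>UNIV - Nstar A b. dval A b (p j - 1) j \<le> x j \<and> x j \<le> dval A b (p j) j) \<and>
     (\<forall>i. sys_lhs A b p x i \<ge> b i) \<and>
     (\<forall>i. sys_lhs A b p x i = lam * x i)"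

end

theory Submission
  imports Defs
begin

lemma fin_alpha_set: "finite ({0} \<union> {b i - (\<Sum>k\<in>UNIV - {j}. A i k) | i. True} :: real set)"
  for A :: "'n::finite \<Rightarrow> 'n \<Rightarrow> real" and b j
proof -
  have "{b i - (\<Sum>k\<in>UNIV - {j}. A i k) | i. True} = range (\<lambda>i. b i - (\<Sum>k\<in>UNIV - {j}. A i k))" by auto
  then show ?thesis by simp
qed

lemma alpha_le:
  fixes A :: "'n::finite \<Rightarrow> 'n \<Rightarrow> real"
  assumes "\<forall>i. maxmin_prod A x i \<ge> b i" "x \<in> unit_box"
  shows "alpha_check A b j \<le> x j"
proof -
  have "\<forall>y\<in>({0} \<union> {b i - (\<Sum>k\<in>UNIV - {j}. A i k) | i. True}). y \<le> x j"
  proof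
    fix y assume "y \<in> ({0} \<union> {b i - (\<Sum>k\<in>UNIV - {j}. A i k) | i. True})"
    then consider "y = 0" | i where "y = b i - (\<Sum>k\<in>UNIV - {j}. A i k)" by auto
    then show "y \<le> x j"
    proof cases
      case 1 then show ?thesis using assms(2) by (auto simp: unit_box_def)
    next
      case (2 i)
      have "maxmin_prod A x i = min (A i j) (x j) + (\<Sum>k\<in>UNIV - {j}. min (A i k) (x k))"
        unfolding maxmin_prod_def by (simp add: sum.remove)
      also have "\<dots> \<le> x j + (\<Sum>k\<in>UNIV - {j}. A i k)"
        by (intro add_mono sum_mono) auto
      finally show ?thesis using 2 assms(1)[rule_format, of i] by linarith
    qed
  qed
  then show ?thesis unfolding alpha_check_def
    by (subst Max_le_iff[OF fin_alpha_set]) auto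
qed

lemma D_props:
  fixes A :: "'n::finite \<Rightarrow> 'n \<Rightarrow> real"
  assumes A01: "\<forall>i j. 0 \<le> A i j \<and> A i j \<le> 1" and al: "alpha_check A b j \<le> 1"
  defines "L \<equiv> sorted_list_of_set (Dset A b j)"
  shows "finite (Dset A b j)" "length L = card (Dset A b j)" "sorted L" "distinct L"
    "set L = Dset A b j" "\<forall>y\<in>Dset A b j. alpha_check A b j \<le> y \<and> y \<le> 1"
    "alpha_check A b j \<in> Dset A b j" "1 \<in> Dset A b j"
proof -
  have "{A i j | i. A i j \<ge> alpha_check A b j} \<subseteq> range (\<lambda>i. A i j)" (is "?S \<subseteq> _") by auto
  then have "finite ?S" by (rule finite_subset) simp
  then show fD: "finite (Dset A b j)" unfolding Dset_def by simp
  show "length L = card (Dset A b j)" "sorted L" "distinct L" "set L = Dset A b j"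
    unfolding L_def using fD by auto
  show "\<forall>y\<in>Dset A b j. alpha_check A b j \<le> y \<and> y \<le> 1"
    unfolding Dset_def using A01 al by auto
  show "alpha_check A b j \<in> Dset A b j" "1 \<in> Dset A b j" unfolding Dset_def by auto
qed

theorem theorem4p2:
  fixes A :: "'n::finite \<Rightarrow> 'n \<Rightarrow> real" and b :: "'n \<Rightarrow> real" and lam :: real
  assumes "\<forall>i j. 0 \<le> A i j \<and> A i j \<le> 1"
    and "\<forall>i. b i > 0"
    and "\<forall>j. alpha_check A b j \<le> 1"
    and "lam \<ge> 0"
    and "\<forall>p\<in>Pset A b. \<not> (\<exists>x\<in>unit_box. system_p A b lam p x)"
  shows "V_star A b lam = {}"
proof (rule ccontr)
  assume "V_star A b lam \<noteq> {}"
  then obtain x where xu: "x \<in> unit_box" and xge: "\<forall>i. maxmin_prod A x i \<ge> b i"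
    and xeq: "\<forall>i. maxmin_prod A x i = lam * x i"
    unfolding V_star_def by blast
  have x01: "0 \<le> x j" "x j \<le> 1" for j using xu unfolding unit_box_def by auto
  have xal: "alpha_check A b j \<le> x j" for j using alpha_le[OF xge xu] .
  note DP = D_props[OF assms(1) assms(3)[rule_format]]
  define L where "L j = sorted_list_of_set (Dset A b j)" for j
  have dv: "dval A b q j = L j ! q" for q j unfolding dval_def L_def by simp
  have len: "length (L j) = lval A b j + 1" for j
  proof -
    have "card (Dset A b j) \<ge> 1" using DP(1,7)[of j] by (metis card_0_eq empty_iff less_one not_le)
    then show ?thesis using DP(2)[of j] unfolding lval_def L_def by simp
  qed
  have inD: "L j ! q \<in> Dset A b j" if "q \<le> lval A b j" for q j
    using DP(5)[of j] len[of j] that unfolding L_def by (metis le_imp_less_Suc nth_mem Suc_eq_plus1)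
  have mono: "L j ! q \<le> L j ! r" if "q \<le> r" "r \<le> lval A b j" for q r j
    using sorted_nth_mono[OF DP(3)[of j], folded L_def, OF that(1)] that len[of j] by simp
  have d0: "L j ! 0 = alpha_check A b j" for j
  proof -
    have "alpha_check A b j \<in> set (L j)" using DP(7)[of j] DP(5)[of j] unfolding L_def by simp
    then obtain k where k: "k < length (L j)" "L j ! k = alpha_check A b j"
      unfolding in_set_conv_nth by blast
    have "L j ! 0 \<le> L j ! k" using mono[of 0 k j] k len[of j] by simp
    moreover have "L j ! 0 \<ge> alpha_check A b j" using DP(6)[of j] inD[of 0 j] by auto
    ultimately show ?thesis using k by simp
  qed
  have dl: "L j ! lval A b j = 1" for j
  proof -
    have "1 \<in> set (L j)" using DP(8)[of j] DP(5)[of j] unfolding L_def by simp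
    then obtain k where k: "k < length (L j)" "L j ! k = 1"
      unfolding in_set_conv_nth by blast
    have "L j ! k \<le> L j ! lval A b j" using mono[of k "lval A b j" j] k len[of j] by simp
    moreover have "L j ! lval A b j \<le> 1" using DP(6)[of j] inD[of "lval A b j" j] by auto
    ultimately show ?thesis using k by simp
  qed
  have lpos: "lval A b j \<ge> 1" if "j \<notin> Nstar A b" for j
  proof (rule ccontr)
    assume "\<not> lval A b j \<ge> 1"
    then have "lval A b j = 0" by simp
    then have "alpha_check A b j = 1" using d0[of j] dl[of j] by simp
    then show False using that unfolding Nstar_def by simp
  qed
  have below: "y \<le> L j ! (q - 1)" if "y \<in> Dset A b j" "y < L j ! q" "q \<le> lval A b j" "q \<ge> 1" for y q j
  proof -
    have "y \<in> set (L j)" using that(1) DP(5)[of j] unfolding L_def by simp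
    then obtain k where k: "k < length (L j)" "L j ! k = y"
      unfolding in_set_conv_nth by blast
    have "k < q"
    proof (rule ccontr)
      assume "\<not> k < q"
      then have "L j ! q \<le> L j ! k" using mono[of q k j] k len[of j] by simp
      then show False using k that by simp
    qed
    then show ?thesis using mono[of k "q - 1" j] k that by simp
  qed
  define p where "p j = (if j \<in> Nstar A b then 0 else (LEAST q. 1 \<le> q \<and> x j \<le> L j ! q))" for j
  have pprops: "1 \<le> p j \<and> x j \<le> L j ! p j \<and> p j \<le> lval A b j \<and> L j ! (p j - 1) \<le> x j"
    if "j \<notin> Nstar A b" for j
  proof -
    have ex: "1 \<le> lval A b j \<and> x j \<le> L j ! lval A b j" using lpos[OF that] dl[of j] x01[of j] by simp
    have pd: "p j = (LEAST q. 1 \<le> q \<and> x j \<le> L j ! q)" using that p_def by simp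
    have h1: "1 \<le> p j \<and> x j \<le> L j ! p j" unfolding pd by (rule LeastI_ex) (use ex in blast)
    have h2: "p j \<le> lval A b j" unfolding pd by (rule Least_le) (use ex in blast)
    have "L j ! (p j - 1) \<le> x j"
    proof (cases "p j = 1")
      case True then show ?thesis using d0[of j] xal[of j] by simp
    next
      case False
      then have "p j - 1 < p j" "1 \<le> p j - 1" using h1 by auto
      then have "\<not> (1 \<le> p j - 1 \<and> x j \<le> L j ! (p j - 1))"
        using not_less_Least[of "p j - 1" "\<lambda>q. 1 \<le> q \<and> x j \<le> L j ! q"] pd by simp
      then show ?thesis using \<open>1 \<le> p j - 1\<close> by simp
    qed
    then show ?thesis using h1 h2 by simp
  qed
  have pP: "p \<in> Pset A b"
    unfolding Pset_def Pj_def using pprops by (auto simp: p_def)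
  have xN: "x j = 1" if "j \<in> Nstar A b" for j
    using xal[of j] x01[of j] that unfolding Nstar_def by simp
  have term_eq: "gamma A b p i j * x j + (1 - gamma A b p i j) * A i j = min (A i j) (x j)"
    if "j \<notin> Nstar A b" for i j
  proof (cases "dval A b (p j) j \<le> A i j")
    case True
    then show ?thesis using pprops[OF that] unfolding gamma_def dv by simp
  next
    case False
    have "A i j \<le> x j"
    proof (cases "A i j \<ge> alpha_check A b j")
      case True
      then have "A i j \<in> Dset A b j" unfolding Dset_def by auto
      then have "A i j \<le> L j ! (p j - 1)" using below[of "A i j" j "p j"] False pprops[OF that]
        unfolding dv by simp
      then show ?thesis using pprops[OF that] by simp
    next
      case False then show ?thesis using xal[of j] by simp
    qed
    then show ?thesis using False unfolding gamma_def by simp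
  qed
  have lhs: "sys_lhs A b p x i = maxmin_prod A x i" for i
  proof -
    have "maxmin_prod A x i = (\<Sum>j\<in>Nstar A b. min (A i j) (x j)) + (\<Sum>j\<in>UNIV - Nstar A b. min (A i j) (x j))"
      unfolding maxmin_prod_def
      using sum.subset_diff[of "Nstar A b" UNIV "\<lambda>j. min (A i j) (x j)"] by simp
    also have "(\<Sum>j\<in>Nstar A b. min (A i j) (x j)) = (\<Sum>j\<in>Nstar A b. A i j)"
      using xN assms(1) by (intro sum.cong) auto
    also have "(\<Sum>j\<in>UNIV - Nstar A b. min (A i j) (x j)) =
      (\<Sum>j\<in>UNIV - Nstar A b. gamma A b p i j * x j + (1 - gamma A b p i j) * A i j)"
      using term_eq by (intro sum.cong) auto
    finally show ?thesis unfolding sys_lhs_def by simp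
  qed
  have "system_p A b lam p x"
    unfolding system_p_def
  proof (intro conjI ballI allI)
    fix j assume j: "j \<in> Nstar A b"
    show "x j = 1" using xN[OF j] .
    show "x j = dval A b 0 j" using xN[OF j] d0[of j] j unfolding dv Nstar_def by simp
  next
    fix j assume "j \<in> UNIV - Nstar A b"
    then show "dval A b (p j - 1) j \<le> x j" "x j \<le> dval A b (p j) j" using pprops unfolding dv by auto
  next
    fix i show "sys_lhs A b p x i \<ge> b i" "sys_lhs A b p x i = lam * x i" using lhs xge xeq by auto
  qed
  then show False using assms(5) pP xu by blast
qed

end
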